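(* For $F\in(0,1]$, $k\in(0,1)$, real $d\ge 2$ and integer $n\ge 1$, let $G=k^{n-1}F$ and $$C_{\mathrm{dp}}(F,d,n,k)=\frac{(1-G)\,(4^{nd}G+2^{nd}-2)}{\big[(2^{nd}-2)G+1\big](2^{nd}-1)}.$$ If $F>2^{-d}$ and $k>2^{-d}$, then, for every $n\ge1$, $C_{\mathrm{dp}}$ is monotonically non-increasing as each of $F$, $d$ and $k$ increases (the other variables held fixed), i.e. $\partial_F C_{\mathrm{dp}}\le 0$, $\partial_d C_{\mathrm{dp}}\le 0$ and $\partial_k C_{\mathrm{dp}}\le 0$ at every such point.
   Context: Interpretation: for integers $d,n$, $C_{\mathrm{dp}}(F,d,n,k)$ equals $\sum_s\frac{4\lambda^+_s\lambda^-_s}{\lambda^+_s+\lambda^-_s}$ computed from the eigenvalues of the $nd$-qubit depolarized GHZ state $G|\mathrm{GHZ}_{nd}\rangle\langle\mathrm{GHZ}_{nd}|+\frac{1-G}{2^{nd}-1}(I-|\mathrm{GHZ}_{nd}\rangle\langle\mathrm{GHZ}_{nd}|)$ in the GHZ basis $|G^\pm_s\rangle=(|s\rangle\pm|\bar s\rangle)/\sqrt2$ (sum over one representative $s$ of each complementary pair of bit strings), i.e. a state whose fidelity $k^{n-1}F$ models imperfect local extension of a $d$-qubit GHZ state of fidelity $F$ to $n$ qubits per node with per-step quality $k$. *)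

theory Defs
  imports "HOL-Analysis.Analysis"
begin

definition Cdp :: "real \<Rightarrow> real \<Rightarrow> nat \<Rightarrow> real \<Rightarrow> real" where
  "Cdp F d n k =
     (let G = k ^ (n - 1) * F; N = 2 powr (real n * d) in
       (1 - G) * (4 powr (real n * d) * G + N - 2) / (((N - 2) * G + 1) * (N - 1)))"

end

theory Submission
  imports Defs
begin

definition H :: "real \<Rightarrow> real \<Rightarrow> real" where
  "H N G = (1-G)*(N^2*G+N-2)/(((N-2)*G+1)*(N-1))"

lemma Cdp_H: "Cdp F d n k = H (2 powr (real n * d)) (k^(n-1)*F)"
proof -
  have "(4::real) powr (real n * d) = (2 powr (real n * d))^2"
    using powr_mult[of 2 2 "real n * d"] by (simp add: power2_eq_square)
  then show ?thesis by (simp add: Cdp_def H_def Let_def)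
qed

lemma dH_G:
  assumes "N > 2" "G > 0"
  shows "((\<lambda>G. H N G) has_real_derivative
     (1-N*G)*(3*N-2+N*(N-2)*G)/((((N-2)*G+1))^2*(N-1))) (at G)"
proof -
  have p: "(N-2)*G+1 > 0" using assms by (simp add: add_pos_pos)
  have n1: "N - 1 > 0" using assms by simp
  have d1: "((\<lambda>G. (1-G)*(N^2*G+N-2)) has_real_derivative (-(N^2*G+N-2) + (1-G)*N^2)) (at G)"
    by (auto intro!: derivative_eq_intros)
  have d2: "((\<lambda>G. ((N-2)*G+1)*(N-1)) has_real_derivative ((N-2)*(N-1))) (at G)"
    by (auto intro!: derivative_eq_intros)
  have d: "((\<lambda>G. H N G) has_real_derivative
     ((-(N^2*G+N-2) + (1-G)*N^2) * (((N-2)*G+1)*(N-1)) - (1-G)*(N^2*G+N-2) * ((N-2)*(N-1)))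
       / ((((N-2)*G+1)*(N-1)) * (((N-2)*G+1)*(N-1)))) (at G)"
    unfolding H_def using DERIV_divide[OF d1 d2] p n1 by simp
  have num: "(-(N^2*G+N-2) + (1-G)*N^2) * (((N-2)*G+1)*(N-1)) - (1-G)*(N^2*G+N-2) * ((N-2)*(N-1))
      = (N-1) * ((1-N*G)*(3*N-2+N*(N-2)*G))"
    by (simp add: algebra_simps power2_eq_square)
  have den: "(((N-2)*G+1)*(N-1)) * (((N-2)*G+1)*(N-1)) = (N-1) * ((((N-2)*G+1))^2*(N-1))"
    by (simp add: algebra_simps power2_eq_square)
  show ?thesis using d unfolding num den using n1 by simp
qed

lemma dH_N:
  assumes "N > 2" "G > 0"
  shows "((\<lambda>N. H N G) has_real_derivative
     (1-G)*(1-N*G)*(1+(3*N-4)*G)/((((N-2)*G+1)*(N-1))^2)) (at N)"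
proof -
  have p: "(N-2)*G+1 > 0" using assms by (simp add: add_pos_pos)
  have n1: "N - 1 > 0" using assms by simp
  have d1: "((\<lambda>N. (1-G)*(N^2*G+N-2)) has_real_derivative ((1-G)*(2*N*G+1))) (at N)"
    by (auto intro!: derivative_eq_intros)
  have d2: "((\<lambda>N. ((N-2)*G+1)*(N-1)) has_real_derivative (G*(N-1) + ((N-2)*G+1))) (at N)"
    by (auto intro!: derivative_eq_intros)
  have d: "((\<lambda>N. H N G) has_real_derivative
     (((1-G)*(2*N*G+1)) * (((N-2)*G+1)*(N-1)) - (1-G)*(N^2*G+N-2) * (G*(N-1) + ((N-2)*G+1)))
       / ((((N-2)*G+1)*(N-1)) * (((N-2)*G+1)*(N-1)))) (at N)"
    unfolding H_def using DERIV_divide[OF d1 d2] p n1 by simp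
  have num: "((1-G)*(2*N*G+1)) * (((N-2)*G+1)*(N-1)) - (1-G)*(N^2*G+N-2) * (G*(N-1) + ((N-2)*G+1))
      = (1-G)*(1-N*G)*(1+(3*N-4)*G)"
    by (simp add: algebra_simps power2_eq_square)
  have den: "(((N-2)*G+1)*(N-1)) * (((N-2)*G+1)*(N-1)) = ((((N-2)*G+1)*(N-1))^2)"
    by (simp add: power2_eq_square)
  show ?thesis using d unfolding num den .
qed

theorem proposition3:
  fixes F d k :: real and n :: nat
  assumes "0 < F" "F \<le> 1" "0 < k" "k < 1" "2 \<le> d" "1 \<le> n"
    and "F > 2 powr (- d)" "k > 2 powr (- d)"
  shows "(\<exists>D. ((\<lambda>x. Cdp x d n k) has_real_derivative D) (at F) \<and> D \<le> 0)
       \<and> (\<exists>D. ((\<lambda>x. Cdp F x n k) has_real_derivative D) (at d) \<and> D \<le> 0)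
       \<and> (\<exists>D. ((\<lambda>x. Cdp F d n x) has_real_derivative D) (at k) \<and> D \<le> 0)"
proof -
  define N where "N = 2 powr (real n * d)"
  define G where "G = k^(n-1)*F"
  have nd: "real n * d \<ge> 2" using assms(5,6)
    by (metis mult_mono mult_1 le_numeral_extra(2) of_nat_1 of_nat_mono dual_order.trans zero_le_numeral linorder_linear)
  have N4: "N \<ge> 4" unfolding N_def
    using powr_mono[OF nd, of 2] by simp
  have N2: "N > 2" using N4 by simp
  have kp: "k^(n-1) > 0" using assms by simp
  have k1: "k^(n-1) \<le> 1" using assms by (simp add: power_le_one)
  have G0: "G > 0" unfolding G_def using kp assms by simp
  have G1: "G \<le> 1" unfolding G_def using k1 assms(1,2) by (simp add: mult_le_one)
  have "k^(n-1) \<ge> (2 powr (-d))^(n-1)" using assms(8) by (simp add: power_mono)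
  then have "G > (2 powr (-d))^(n-1) * 2 powr (-d)" unfolding G_def
    using assms(7) kp by (intro mult_le_less_imp_less) auto
  also have "(2 powr (-d))^(n-1) * 2 powr (-d) = (2 powr (-d))^n"
    using assms(6) by (metis Suc_diff_1 less_le_trans zero_less_one power_Suc2)
  also have "\<dots> = 2 powr (- (real n * d))"
    by (simp add: powr_realpow[symmetric] powr_powr mult.commute)
  finally have "N * G > N * 2 powr (- (real n * d))" using N2 by simp
  also have "N * 2 powr (- (real n * d)) = 1" unfolding N_def by (simp add: powr_add[symmetric])
  finally have NG: "N * G > 1" .
  define HG where "HG = (1-N*G)*(3*N-2+N*(N-2)*G)/((((N-2)*G+1))^2*(N-1))"
  have pG: "(N-2)*G+1 > 0" using N2 G0 by (simp add: add_pos_pos)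
  have HG: "HG \<le> 0" unfolding HG_def
    using NG N2 G0 pG by (intro divide_nonpos_pos mult_nonpos_nonneg) (auto intro!: add_nonneg_nonneg add_pos_pos)
  have dG: "((\<lambda>G. H N G) has_real_derivative HG) (at G)"
    unfolding HG_def using dH_G[OF N2 G0] .
  define HN where "HN = (1-G)*(1-N*G)*(1+(3*N-4)*G)/((((N-2)*G+1)*(N-1))^2)"
  have HN: "HN \<le> 0" unfolding HN_def
    using NG N2 G0 G1 by (intro divide_nonpos_nonneg mult_nonpos_nonneg mult_nonneg_nonpos) (auto intro!: add_nonneg_nonneg)
  have dN: "((\<lambda>N. H N G) has_real_derivative HN) (at N)"
    unfolding HN_def using dH_N[OF N2 G0] .
  have A: "\<exists>D. ((\<lambda>x. Cdp x d n k) has_real_derivative D) (at F) \<and> D \<le> 0"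
  proof (intro exI conjI)
    have g: "((\<lambda>x. k^(n-1)*x) has_real_derivative k^(n-1)) (at F)"
      by (auto intro!: derivative_eq_intros)
    show "((\<lambda>x. Cdp x d n k) has_real_derivative HG * k^(n-1)) (at F)"
      unfolding Cdp_H N_def[symmetric] using DERIV_chain2[of "H N", OF _ g] dG unfolding G_def by simp
    show "HG * k^(n-1) \<le> 0" using HG kp by (simp add: mult_nonpos_nonneg)
  qed
  have B: "\<exists>D. ((\<lambda>x. Cdp F x n k) has_real_derivative D) (at d) \<and> D \<le> 0"
  proof (intro exI conjI)
    have g: "((\<lambda>x. 2 powr (real n * x)) has_real_derivative (N * (ln 2 * real n))) (at d)"
      unfolding N_def by (auto intro!: derivative_eq_intros)
    show "((\<lambda>x. Cdp F x n k) has_real_derivative HN * (N * (ln 2 * real n))) (at d)"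
      unfolding Cdp_H G_def[symmetric] using DERIV_chain2[of "\<lambda>N. H N G", OF _ g] dN unfolding N_def by simp
    show "HN * (N * (ln 2 * real n)) \<le> 0" using HN N2 by (intro mult_nonpos_nonneg) auto
  qed
  have C: "\<exists>D. ((\<lambda>x. Cdp F d n x) has_real_derivative D) (at k) \<and> D \<le> 0"
  proof (intro exI conjI)
    have g: "((\<lambda>x. x^(n-1)*F) has_real_derivative (real (n-1) * k^(n-1-1) * F)) (at k)"
      by (auto intro!: derivative_eq_intros)
    show "((\<lambda>x. Cdp F d n x) has_real_derivative HG * (real (n-1) * k^(n-1-1) * F)) (at k)"
      unfolding Cdp_H N_def[symmetric] using DERIV_chain2[of "H N", OF _ g] dG unfolding G_def by simp
    show "HG * (real (n-1) * k^(n-1-1) * F) \<le> 0" using HG assms(1,3) by (intro mult_nonpos_nonneg) auto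
  qed
  show ?thesis using A B C by blast
qed

end
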